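(* Let $(\alpha,\beta)$ be a harmonic $\mathrm{SO}(4)$-structure on a $7$-dimensional Lie algebra $\mathfrak g$, and let $\eta\in\Lambda^{1,0}$ be a $1$-form of unit norm such that $\mathfrak n=\ker\eta$ is a Lie subalgebra. Then $\mathfrak n$ carries an induced half-flat $\mathrm{SL}(3,\mathbb R)$-structure $(\omega,\rho)$ with $\alpha|_{\mathfrak n}=\tfrac{\sqrt6}{3}\rho$ and $\beta|_{\mathfrak n}=-\tfrac16\omega^2$. If in addition $\mathfrak n$ is an ideal, then the derivation $b=\mathrm{ad}(\sqrt2\,\eta^\sharp)|_{\mathfrak n}\in\mathrm{Der}(\mathfrak n)$ satisfies $$b\cdot\rho+d\omega=0,\qquad -\tfrac14\,b\cdot\omega^2+d\hat\rho+2\,d\gamma=0,$$ where $d$ is the differential of $\mathfrak n$ and $\hat\rho,\gamma$ are the forms associated with the $\mathrm{SL}(3,\mathbb R)$-structure. Conversely, if $\mathfrak n$ is a $6$-dimensional Lie algebra with a derivation $b$ and a half-flat $\mathrm{SL}(3,\mathbb R)$-structure satisfying these two equations, then the semidirect product $\mathfrak g=\mathfrak n\rtimes_b\mathbb R$ ($\mathfrak g=\mathfrak n\oplus\mathbb RT$, $[T,X]=b(X)$) admits a harmonic $\mathrm{SO}(4)$-structure.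
   Context: $\mathrm{SO}(4)$-structures: on $\mathbb R^7$ with dual basis $e^1,\dots,e^7$, $w^s=e^{4+s}$, set $\omega_1=e^{12}-e^{34}$, $\omega_2=e^{13}-e^{42}$, $\omega_3=e^{14}-e^{23}$, $\alpha=\sum_s\omega_s\wedge w^s-3w^{123}$, $\beta=-\omega_1\wedge w^{23}-\omega_2\wedge w^{31}-\omega_3\wedge w^{12}-3e^{1234}$. An $\mathrm{SO}(4)$-structure on a Lie algebra $\mathfrak g$ is a pair $(\alpha,\beta)$ having this form in some ("adapted") coframe $e^1,\dots,e^4,w^1,w^2,w^3$, declared orthonormal; $\eta^\sharp$ is the metric dual of $\eta$; $\Lambda^{1,0}=\mathrm{span}(e^1,\dots,e^4)$; harmonic means $d\alpha=0=d\beta$. $\mathrm{SL}(3,\mathbb R)$-structure on a $6$-dimensional Lie algebra $\mathfrak n$: a pair $(\omega,\rho)$ such that for some coframe $E^1,\dots,E^6$, $\omega=E^{12}+E^{34}+E^{56}$ and $\rho=E^{135}+E^{246}$; the structure then determines $\hat\rho=E^{135}-E^{246}$ and the $3$-form $\gamma=(E^1-E^2)\wedge(E^3-E^4)\wedge(E^5-E^6)$, both fixed by the stabiliser $\mathrm{SL}(3,\mathbb R)$ of $(\omega,\rho)$. It is half-flat if $d\rho=0$ and $d(\omega^2)=0$. A derivation $b$ of $\mathfrak n$ acts on $\Lambda^*\mathfrak n^*$ by the natural induced action extended as a derivation, $(b\cdot\theta)(v)=-\theta(bv)$ for $\theta\in\mathfrak n^*$. *)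

theory Defs
  imports "HOL-Analysis.Analysis"
begin

(* Exterior forms on a real vector space 'a are represented as functions on lists of
   vectors ('a list => real); a k-form is only ever evaluated on lists of length k. *)
type_synonym 'a form = "'a list \<Rightarrow> real"

definition lie_algebra :: "('a::real_vector \<Rightarrow> 'a \<Rightarrow> 'a) \<Rightarrow> bool" where
  "lie_algebra br \<longleftrightarrow> bilinear br \<and> (\<forall>x. br x x = 0) \<and>
     (\<forall>x y z. br x (br y z) + br y (br z x) + br z (br x y) = 0)"

definition lie_derivation :: "('a::real_vector \<Rightarrow> 'a \<Rightarrow> 'a) \<Rightarrow> ('a \<Rightarrow> 'a) \<Rightarrow> bool" where
  "lie_derivation br b \<longleftrightarrow> linear b \<and> (\<forall>x y. b (br x y) = br (b x) y + br x (b y))"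

definition coframe :: "nat \<Rightarrow> 'a::real_vector set \<Rightarrow> (nat \<Rightarrow> 'a \<Rightarrow> real) \<Rightarrow> bool" where
  "coframe m V e \<longleftrightarrow> (\<forall>i\<in>{1..m}. linear (e i)) \<and>
     (\<forall>x\<in>V. (\<forall>i\<in>{1..m}. e i x = 0) \<longrightarrow> x = 0) \<and>
     (\<forall>c::nat \<Rightarrow> real. \<exists>x\<in>V. \<forall>i\<in>{1..m}. e i x = c i)"

definition omit :: "nat \<Rightarrow> 'x list \<Rightarrow> 'x list" where
  "omit i xs = take i xs @ drop (Suc i) xs"

definition dform :: "('a \<Rightarrow> 'a \<Rightarrow> 'a) \<Rightarrow> 'a form \<Rightarrow> 'a form" where
  "dform br \<theta> xs = (\<Sum>i<length xs. \<Sum>j\<in>{i<..<length xs}.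
      (-1) ^ (i + j) * \<theta> (br (xs ! i) (xs ! j) # omit i (omit j xs)))"

definition wedge1 :: "('a \<Rightarrow> real) list \<Rightarrow> 'a form" where
  "wedge1 fs xs = (\<Sum>p\<in>{p. p permutes {..<length fs}}.
      of_int (sign p) * (\<Prod>i<length fs. (fs ! i) (xs ! (p i))))"

definition wedge :: "nat \<Rightarrow> nat \<Rightarrow> 'a form \<Rightarrow> 'a form \<Rightarrow> 'a form" where
  "wedge p q A B xs = (\<Sum>s\<in>{s. s permutes {..<p+q}}.
      of_int (sign s) * A (map (\<lambda>i. xs ! (s i)) [0..<p]) * B (map (\<lambda>i. xs ! (s i)) [p..<p+q]))
      / (fact p * fact q)"

definition der_act :: "('a \<Rightarrow> 'a) \<Rightarrow> 'a form \<Rightarrow> 'a form" where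
  "der_act b \<theta> xs = - (\<Sum>i<length xs. \<theta> (xs[i := b (xs ! i)]))"

(* SO(4)-structure forms in a coframe e 1..e 7, with w^s = e (4+s) *)
definition so4_om :: "(nat \<Rightarrow> 'a \<Rightarrow> real) \<Rightarrow> nat \<Rightarrow> 'a form" where
  "so4_om e s xs = (if s = 1 then wedge1 [e 1, e 2] xs - wedge1 [e 3, e 4] xs
     else if s = 2 then wedge1 [e 1, e 3] xs - wedge1 [e 4, e 2] xs
     else wedge1 [e 1, e 4] xs - wedge1 [e 2, e 3] xs)"

definition so4_alpha :: "(nat \<Rightarrow> 'a \<Rightarrow> real) \<Rightarrow> 'a form" where
  "so4_alpha e xs = (\<Sum>s\<in>{1,2,3::nat}. wedge 2 1 (so4_om e s) (wedge1 [e (4+s)]) xs)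
     - 3 * wedge1 [e 5, e 6, e 7] xs"

definition so4_beta :: "(nat \<Rightarrow> 'a \<Rightarrow> real) \<Rightarrow> 'a form" where
  "so4_beta e xs = - wedge 2 2 (so4_om e 1) (wedge1 [e 6, e 7]) xs
     - wedge 2 2 (so4_om e 2) (wedge1 [e 7, e 5]) xs
     - wedge 2 2 (so4_om e 3) (wedge1 [e 5, e 6]) xs
     - 3 * wedge1 [e 1, e 2, e 3, e 4] xs"

definition sl3_omega :: "(nat \<Rightarrow> 'a \<Rightarrow> real) \<Rightarrow> 'a form" where
  "sl3_omega E xs = wedge1 [E 1, E 2] xs + wedge1 [E 3, E 4] xs + wedge1 [E 5, E 6] xs"

definition sl3_rho :: "(nat \<Rightarrow> 'a \<Rightarrow> real) \<Rightarrow> 'a form" where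
  "sl3_rho E xs = wedge1 [E 1, E 3, E 5] xs + wedge1 [E 2, E 4, E 6] xs"

definition sl3_rhohat :: "(nat \<Rightarrow> 'a \<Rightarrow> real) \<Rightarrow> 'a form" where
  "sl3_rhohat E xs = wedge1 [E 1, E 3, E 5] xs - wedge1 [E 2, E 4, E 6] xs"

definition sl3_gamma :: "(nat \<Rightarrow> 'a \<Rightarrow> real) \<Rightarrow> 'a form" where
  "sl3_gamma E = wedge1 [\<lambda>x. E 1 x - E 2 x, \<lambda>x. E 3 x - E 4 x, \<lambda>x. E 5 x - E 6 x]"

text \<open>The semidirect product n \<rtimes>_b R = n + R T with [T,X] = b X.\<close>
definition semidirect :: "('n::real_vector \<Rightarrow> 'n \<Rightarrow> 'n) \<Rightarrow> ('n \<Rightarrow> 'n) \<Rightarrow> 'n \<times> real \<Rightarrow> 'n \<times> real \<Rightarrow> 'n \<times> real" where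
  "semidirect br b p q = (br (fst p) (fst q) + snd p *\<^sub>R b (fst q) - snd q *\<^sub>R b (fst p), 0)"

end

theory Submission
  imports Defs
begin


lemma w1_1: "wedge1 [f] [x] = f x"
proof -
  have l: "length [f] = 1" by simp
  have e: "{..<1::nat} = {0}" by auto
  show ?thesis unfolding wedge1_def l e by (simp add: permutes_sing)
qed

lemma w1_2: "wedge1 [f,g] [x,y] = f x * g y - f y * g x"
proof -
  have l: "length [f,g] = 2" by simp
  have e: "{..<2::nat} = insert 0 {1}" by auto
  have f: "finite {1::nat}" "(0::nat) \<notin> {1}" by auto
  show ?thesis unfolding wedge1_def l e sum_over_permutations_insert[OF f]
    by (simp add: permutes_sing sign_swap_id swap_id_eq lessThan_nat_numeral)
qed

lemma w1_3: "wedge1 [f,g,h] [x,y,z] = f x * g y * h z - f x * g z * h y - f y * g x * h z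
   + f y * g z * h x + f z * g x * h y - f z * g y * h x"
proof -
  have l: "length [f,g,h] = 3" by simp
  have e: "{..<3::nat} = insert 0 (insert 1 {2})" by auto
  have f: "finite (insert 1 {2::nat})" "(0::nat) \<notin> insert 1 {2}" by auto
  have f2: "finite {2::nat}" "(1::nat) \<notin> {2}" by auto
  show ?thesis unfolding wedge1_def l e
    unfolding sum_over_permutations_insert[OF f]  sum_over_permutations_insert[OF f2]
    by (simp add: permutes_sing sign_swap_id permutation_swap_id sign_compose permutation_compose swap_id_eq lessThan_nat_numeral algebra_simps)
qed

lemma w1_4: "wedge1 [f1,f2,f3,f4] [x1,x2,x3,x4] = 
  f1 x1 * f2 x2 * f3 x3 * f4 x4 - f1 x1 * f2 x2 * f3 x4 * f4 x3 - f1 x1 * f2 x3 * f3 x2 * f4 x4 + f1 x1 * f2 x3 * f3 x4 * f4 x2 + f1 x1 * f2 x4 * f3 x2 * f4 x3 - f1 x1 * f2 x4 * f3 x3 * f4 x2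
 - f1 x2 * f2 x1 * f3 x3 * f4 x4 + f1 x2 * f2 x1 * f3 x4 * f4 x3 + f1 x2 * f2 x3 * f3 x1 * f4 x4 - f1 x2 * f2 x3 * f3 x4 * f4 x1 - f1 x2 * f2 x4 * f3 x1 * f4 x3 + f1 x2 * f2 x4 * f3 x3 * f4 x1
 + f1 x3 * f2 x1 * f3 x2 * f4 x4 - f1 x3 * f2 x1 * f3 x4 * f4 x2 - f1 x3 * f2 x2 * f3 x1 * f4 x4 + f1 x3 * f2 x2 * f3 x4 * f4 x1 + f1 x3 * f2 x4 * f3 x1 * f4 x2 - f1 x3 * f2 x4 * f3 x2 * f4 x1
 - f1 x4 * f2 x1 * f3 x2 * f4 x3 + f1 x4 * f2 x1 * f3 x3 * f4 x2 + f1 x4 * f2 x2 * f3 x1 * f4 x3 - f1 x4 * f2 x2 * f3 x3 * f4 x1 - f1 x4 * f2 x3 * f3 x1 * f4 x2 + f1 x4 * f2 x3 * f3 x2 * f4 x1"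
proof -
  have l: "length [f1,f2,f3,f4] = 4" by simp
  have e: "{..<4::nat} = insert 0 (insert 1 (insert 2 {3}))" by auto
  have f: "finite (insert 1 (insert 2 {3::nat}))" "(0::nat) \<notin> insert 1 (insert 2 {3})" by auto
  have f2: "finite (insert 2 {3::nat})" "(1::nat) \<notin> insert 2 {3}" by auto
  have f3: "finite {3::nat}" "(2::nat) \<notin> {3}" by auto
  show ?thesis unfolding wedge1_def l e
    unfolding sum_over_permutations_insert[OF f]  sum_over_permutations_insert[OF f2] sum_over_permutations_insert[OF f3]
    by (simp add: permutes_sing sign_swap_id permutation_swap_id sign_compose permutation_compose swap_id_eq lessThan_nat_numeral algebra_simps)
qed

lemma w21: "wedge 2 1 A B [x,y,z] = (A [x,y] * B [z] - A [x,z] * B [y] - A [y,x] * B [z]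
   + A [y,z] * B [x] + A [z,x] * B [y] - A [z,y] * B [x]) / 2"
proof -
  have e: "{..<2+1::nat} = insert 0 (insert 1 {2})" by auto
  have f: "finite (insert 1 {2::nat})" "(0::nat) \<notin> insert 1 {2}" by auto
  have f2: "finite {2::nat}" "(1::nat) \<notin> {2}" by auto
  have u: "[0..<2] = [0,1::nat]" "[2..<2+1] = [2::nat]" by (simp_all add: upt_rec)
  show ?thesis unfolding wedge_def e u
    unfolding sum_over_permutations_insert[OF f]  sum_over_permutations_insert[OF f2]
    by (simp add: permutes_sing sign_swap_id permutation_swap_id sign_compose permutation_compose swap_id_eq algebra_simps)
qed

lemma w22: "wedge 2 2 A B [x,y,z,u] = (A [x,y] * B [z,u] - A [x,y] * B [u,z] - A [x,z] * B [y,u] + A [x,z] * B [u,y] + A [x,u] * B [y,z] - A [x,u] * B [z,y] - A [y,x] * B [z,u] + A [y,x] * B [u,z] + A [y,z] * B [x,u] - A [y,z] * B [u,x] - A [y,u] * B [x,z] + A [y,u] * B [z,x] + A [z,x] * B [y,u] - A [z,x] * B [u,y] - A [z,y] * B [x,u] + A [z,y] * B [u,x] + A [z,u] * B [x,y] - A [z,u] * B [y,x] - A [u,x] * B [y,z] + A [u,x] * B [z,y] + A [u,y] * B [x,z] - A [u,y] * B [z,x] - A [u,z] * B [x,y] + A [u,z] * B [y,x]) / 4"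
proof -
  have e: "{..<2+2::nat} = insert 0 (insert 1 (insert 2 {3}))" by auto
  have f: "finite (insert 1 (insert 2 {3::nat}))" "(0::nat) \<notin> insert 1 (insert 2 {3})" by auto
  have f2: "finite (insert 2 {3::nat})" "(1::nat) \<notin> insert 2 {3}" by auto
  have f3: "finite {3::nat}" "(2::nat) \<notin> {3}" by auto
  have u: "[0..<2] = [0,1::nat]" "[2..<2+2] = [2::nat,3]" by (simp_all add: upt_rec)
  show ?thesis unfolding wedge_def e u
    unfolding sum_over_permutations_insert[OF f]  sum_over_permutations_insert[OF f2] sum_over_permutations_insert[OF f3]
    by (simp add: permutes_sing sign_swap_id permutation_swap_id sign_compose permutation_compose swap_id_eq algebra_simps)
qed

lemma dform_3: "dform br \<theta> [x0, x1, x2] = - \<theta> (br x0 x1 # [x2]) + \<theta> (br x0 x2 # [x1]) - \<theta> (br x1 x2 # [x0])"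
proof -
  have s: "{..<3::nat} = {0,1,2}" "{0<..<3::nat} = {1,2}" "{Suc 0<..<3::nat} = {2}" "{2<..<3::nat} = {}" by auto
  have l: "length [x0,x1,x2] = 3" by simp
  show ?thesis unfolding dform_def l by (simp add: s omit_def)
qed
lemma dform_4: "dform br \<theta> [x0, x1, x2, x3] = - \<theta> (br x0 x1 # [x2, x3]) + \<theta> (br x0 x2 # [x1, x3]) - \<theta> (br x0 x3 # [x1, x2]) - \<theta> (br x1 x2 # [x0, x3]) + \<theta> (br x1 x3 # [x0, x2]) - \<theta> (br x2 x3 # [x0, x1])"
proof -
  have s: "{..<4::nat} = {0,1,2,3}" "{0<..<4::nat} = {1,2,3}" "{Suc 0<..<4::nat} = {2,3}" "{2<..<4::nat} = {3}" "{3<..<4::nat} = {}" by auto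
  have l: "length [x0,x1,x2,x3] = 4" by simp
  show ?thesis unfolding dform_def l by (simp add: s omit_def)
qed
lemma dform_5: "dform br \<theta> [x0, x1, x2, x3, x4] = - \<theta> (br x0 x1 # [x2, x3, x4]) + \<theta> (br x0 x2 # [x1, x3, x4]) - \<theta> (br x0 x3 # [x1, x2, x4]) + \<theta> (br x0 x4 # [x1, x2, x3]) - \<theta> (br x1 x2 # [x0, x3, x4]) + \<theta> (br x1 x3 # [x0, x2, x4]) - \<theta> (br x1 x4 # [x0, x2, x3]) - \<theta> (br x2 x3 # [x0, x1, x4]) + \<theta> (br x2 x4 # [x0, x1, x3]) - \<theta> (br x3 x4 # [x0, x1, x2])"
proof -
  have s: "{..<5::nat} = {0,1,2,3,4}" "{0<..<5::nat} = {1,2,3,4}" "{Suc 0<..<5::nat} = {2,3,4}" "{2<..<5::nat} = {3,4}" "{3<..<5::nat} = {4}" "{4<..<5::nat} = {}" by auto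
  have l: "length [x0,x1,x2,x3,x4] = 5" by simp
  show ?thesis unfolding dform_def l by (simp add: s omit_def)
qed
lemma der_act_3: "der_act b \<theta> [x0, x1, x2] = - (\<theta> [b x0, x1, x2] + \<theta> [x0, b x1, x2] + \<theta> [x0, x1, b x2])"
  by (simp add: der_act_def lessThan_nat_numeral eval_nat_numeral)
lemma der_act_4: "der_act b \<theta> [x0, x1, x2, x3] = - (\<theta> [b x0, x1, x2, x3] + \<theta> [x0, b x1, x2, x3] + \<theta> [x0, x1, b x2, x3] + \<theta> [x0, x1, x2, b x3])"
  by (simp add: der_act_def lessThan_nat_numeral eval_nat_numeral)


lemma s6: "sqrt 6 = sqrt 2 * sqrt 3" by (simp add: real_sqrt_mult[symmetric])
lemma sq2: "sqrt 2 * (sqrt 2 * x) = 2 * x" "sqrt 2 * sqrt 2 = 2" by (simp_all add: mult.assoc[symmetric])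
lemma sq3: "sqrt 3 * (sqrt 3 * x) = 3 * x" "sqrt 3 * sqrt 3 = 3" by (simp_all add: mult.assoc[symmetric])

definition Eg :: "(nat \<Rightarrow> 'a \<Rightarrow> real) \<Rightarrow> nat \<Rightarrow> 'a \<Rightarrow> real" where
"Eg g k x = (if k = 1 then sqrt 2/2*(g 2 x - sqrt 3 * g 5 x) else if k=2 then -sqrt 2/2*(g 2 x + sqrt 3 * g 5 x)
   else if k=3 then sqrt 2/2*(g 3 x - sqrt 3 * g 6 x) else if k = 4 then -sqrt 2/2*(g 3 x + sqrt 3 * g 6 x)
   else if k=5 then sqrt 2/2*(g 4 x - sqrt 3 * g 7 x) else -sqrt 2/2*(g 4 x + sqrt 3 * g 7 x))"

lemma Q_expl: "wedge 2 2 (sl3_omega E) (sl3_omega E) [x,y,z,u] = 2 * (wedge1 [E 1, E 2, E 3, E 4] [x,y,z,u]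
   + wedge1 [E 1, E 2, E 5, E 6] [x,y,z,u] + wedge1 [E 3, E 4, E 5, E 6] [x,y,z,u])"
  unfolding w22 sl3_omega_def w1_2 w1_4 by (simp add: algebra_simps add_divide_distrib diff_divide_distrib)

lemma beta_expl: "so4_beta g xs = - wedge 2 2 (so4_om g 1) (wedge1 [g 6, g 7]) xs
     - wedge 2 2 (so4_om g 2) (wedge1 [g 7, g 5]) xs
     - wedge 2 2 (so4_om g 3) (wedge1 [g 5, g 6]) xs
     - 3 * wedge1 [g 1, g 2, g 3, g 4] xs" unfolding so4_beta_def by simp

lemma I2: assumes "g 1 x = 0" "g 1 y = 0" "g 1 z = 0" "g 1 u = 0"
  shows "so4_beta g [x,y,z,u] = - 1/6 * wedge 2 2 (sl3_omega (Eg g)) (sl3_omega (Eg g)) [x,y,z,u]"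
proof -
  have a: "g (Suc 0) x = 0" "g (Suc 0) y = 0" "g (Suc 0) z = 0" "g (Suc 0) u = 0" using assms by simp_all
  show ?thesis
  unfolding beta_expl Q_expl
  unfolding w22 w1_2 w1_4
  by (simp add: so4_om_def Eg_def assms a algebra_simps sq2 sq3 w1_2 add_divide_distrib diff_divide_distrib)
qed


lemma alpha_expl: "so4_alpha g xs = wedge 2 1 (so4_om g 1) (wedge1 [g 5]) xs + wedge 2 1 (so4_om g 2) (wedge1 [g 6]) xs
  + wedge 2 1 (so4_om g 3) (wedge1 [g 7]) xs - 3 * wedge1 [g 5, g 6, g 7] xs"
  unfolding so4_alpha_def by (simp add: eval_nat_numeral)

lemma I3: assumes "g 1 y = 0" "g 1 z = 0" "g 1 v = 1" "g 2 v = 0" "g 3 v = 0" "g 4 v = 0" "g 5 v = 0" "g 6 v = 0" "g 7 v = 0"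
  shows "sl3_omega (Eg g) [y,z] = - sqrt 3 * so4_alpha g [v,y,z]"
proof -
  have a: "g (Suc 0) y = 0" "g (Suc 0) z = 0" "g (Suc 0) v = 1" using assms by simp_all
  show ?thesis
  unfolding alpha_expl sl3_omega_def w21 w1_1 w1_2 w1_3 
  by (simp add: so4_om_def Eg_def assms a algebra_simps sq2 sq3 w1_2 add_divide_distrib diff_divide_distrib)
qed

lemma I3b: assumes "g 1 y = 0" "g 1 z = 0" "g 1 v = 1" "g 2 v = 0" "g 3 v = 0" "g 4 v = 0" "g 5 v = 0" "g 6 v = 0" "g 7 v = 0"
  shows "sl3_omega (Eg g) [y,z] = sqrt 3 * so4_alpha g [y,v,z]"
proof -
  have a: "g (Suc 0) y = 0" "g (Suc 0) z = 0" "g (Suc 0) v = 1" using assms by simp_all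
  show ?thesis
  unfolding alpha_expl sl3_omega_def w21 w1_1 w1_2 w1_3 
  by (simp add: so4_om_def Eg_def assms a algebra_simps sq2 sq3 w1_2 add_divide_distrib diff_divide_distrib)
qed

lemma I4: assumes "g 1 y = 0" "g 1 z = 0" "g 1 u = 0" "g 1 v = 1" "g 2 v = 0" "g 3 v = 0" "g 4 v = 0" "g 5 v = 0" "g 6 v = 0" "g 7 v = 0"
  shows "so4_beta g [v,y,z,u] = - (sqrt 2/3) * (sl3_rhohat (Eg g) [y,z,u] + 2 * sl3_gamma (Eg g) [y,z,u])"
proof -
  have a: "g (Suc 0) y = 0" "g (Suc 0) z = 0" "g (Suc 0) u = 0" "g (Suc 0) v = 1" using assms by simp_all
  show ?thesis
  unfolding beta_expl sl3_rhohat_def sl3_gamma_def w22 w1_2 w1_3 w1_4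
  by (simp add: so4_om_def Eg_def assms a algebra_simps sq2 sq3 w1_2 add_divide_distrib diff_divide_distrib)
qed

lemma I4b: assumes "g 1 y = 0" "g 1 z = 0" "g 1 u = 0" "g 1 v = 1" "g 2 v = 0" "g 3 v = 0" "g 4 v = 0" "g 5 v = 0" "g 6 v = 0" "g 7 v = 0"
  shows "so4_beta g [y,v,z,u] = (sqrt 2/3) * (sl3_rhohat (Eg g) [y,z,u] + 2 * sl3_gamma (Eg g) [y,z,u])"
proof -
  have a: "g (Suc 0) y = 0" "g (Suc 0) z = 0" "g (Suc 0) u = 0" "g (Suc 0) v = 1" using assms by simp_all
  show ?thesis
  unfolding beta_expl sl3_rhohat_def sl3_gamma_def w22 w1_2 w1_3 w1_4
  by (simp add: so4_om_def Eg_def assms a algebra_simps sq2 sq3 w1_2 add_divide_distrib diff_divide_distrib)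
qed


definition Ge :: "(nat \<Rightarrow> 'n \<Rightarrow> real) \<Rightarrow> nat \<Rightarrow> 'n \<times> real \<Rightarrow> real" where
"Ge E k p = (if k = 1 then sqrt 2 * snd p
   else if k = 2 then sqrt 2/2 * (E 1 (fst p) - E 2 (fst p))
   else if k = 3 then sqrt 2/2 * (E 3 (fst p) - E 4 (fst p))
   else if k = 4 then sqrt 2/2 * (E 5 (fst p) - E 6 (fst p))
   else if k = 5 then - (sqrt 2 * sqrt 3/6) * (E 1 (fst p) + E 2 (fst p))
   else if k = 6 then - (sqrt 2 * sqrt 3/6) * (E 3 (fst p) + E 4 (fst p))
   else - (sqrt 2 * sqrt 3/6) * (E 5 (fst p) + E 6 (fst p)))"


lemma Dalpha: "so4_alpha (Ge E) [p,q,r] = - (sqrt 6/3) * (snd p * sl3_omega E [fst q, fst r]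
   - snd q * sl3_omega E [fst p, fst r] + snd r * sl3_omega E [fst p, fst q])
   + sqrt 6/3 * sl3_rho E [fst p, fst q, fst r]"
  unfolding alpha_expl sl3_omega_def sl3_rho_def w21 w1_1 w1_2 w1_3 
  by (simp add: so4_om_def Ge_def s6 algebra_simps sq2 sq3 w1_2 add_divide_distrib diff_divide_distrib)

lemma GDbeta: "so4_beta g [p,q,r,s] = - (sqrt 2/3) * (g 1 p * (sl3_rhohat (Eg g) [q,r,s] + 2 * sl3_gamma (Eg g) [q,r,s])
   - g 1 q * (sl3_rhohat (Eg g) [p,r,s] + 2 * sl3_gamma (Eg g) [p,r,s])
   + g 1 r * (sl3_rhohat (Eg g) [p,q,s] + 2 * sl3_gamma (Eg g) [p,q,s])
   - g 1 s * (sl3_rhohat (Eg g) [p,q,r] + 2 * sl3_gamma (Eg g) [p,q,r]))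
   - 1/6 * wedge 2 2 (sl3_omega (Eg g)) (sl3_omega (Eg g)) [p,q,r,s]"
  unfolding beta_expl Q_expl
  unfolding sl3_rhohat_def sl3_gamma_def w22 w1_2 w1_3 w1_4
  by (simp add: so4_om_def Eg_def algebra_simps sq2 sq3 w1_2 add_divide_distrib diff_divide_distrib del: One_nat_def)


lemma om_alt: "sl3_omega E [a,b] = - sl3_omega E [b,a]"
  unfolding sl3_omega_def w1_2 by (simp add: algebra_simps)
lemma rho_alt: "sl3_rho E [a,b,c] = - sl3_rho E [b,a,c]" "sl3_rho E [a,b,c] = sl3_rho E [c,a,b]"
  unfolding sl3_rho_def w1_3 by (simp_all add: algebra_simps)
lemma rhohat_alt: "sl3_rhohat E [a,b,c] = - sl3_rhohat E [b,a,c]" "sl3_rhohat E [a,b,c] = sl3_rhohat E [c,a,b]"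
  unfolding sl3_rhohat_def w1_3 by (simp_all add: algebra_simps)
lemma gamma_alt: "sl3_gamma E [a,b,c] = - sl3_gamma E [b,a,c]" "sl3_gamma E [a,b,c] = sl3_gamma E [c,a,b]"
  unfolding sl3_gamma_def w1_3 by (simp_all add: algebra_simps)
lemma Q_alt: "wedge 2 2 (sl3_omega E) (sl3_omega E) [a,b,c,d] = - wedge 2 2 (sl3_omega E) (sl3_omega E) [b,a,c,d]"
   "wedge 2 2 (sl3_omega E) (sl3_omega E) [a,b,c,d] = wedge 2 2 (sl3_omega E) (sl3_omega E) [c,a,b,d]"
   "wedge 2 2 (sl3_omega E) (sl3_omega E) [a,b,c,d] = - wedge 2 2 (sl3_omega E) (sl3_omega E) [d,a,b,c]"
  unfolding Q_expl w1_4 by (simp_all add: algebra_simps)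

locale linE = fixes E :: "nat \<Rightarrow> 'a::real_vector \<Rightarrow> real"
  assumes lin1: "linear (E 1)" and lin2: "linear (E 2)" and lin3: "linear (E 3)"
    and lin4: "linear (E 4)" and lin5: "linear (E 5)" and lin6: "linear (E 6)"
begin
lemmas L = linear_add[OF lin1] linear_add[OF lin2] linear_add[OF lin3] linear_add[OF lin4] linear_add[OF lin5] linear_add[OF lin6]
  linear_diff[OF lin1] linear_diff[OF lin2] linear_diff[OF lin3] linear_diff[OF lin4] linear_diff[OF lin5] linear_diff[OF lin6]
  linear_scale[OF lin1] linear_scale[OF lin2] linear_scale[OF lin3] linear_scale[OF lin4] linear_scale[OF lin5] linear_scale[OF lin6]
  linear_add[OF lin1[unfolded One_nat_def]] linear_diff[OF lin1[unfolded One_nat_def]] linear_scale[OF lin1[unfolded One_nat_def]]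

lemma om_lin: "sl3_omega E [u + s *\<^sub>R w1 - t *\<^sub>R w2, a] = sl3_omega E [u,a] + s * sl3_omega E [w1,a] - t * sl3_omega E [w2,a]"
  "sl3_omega E [c *\<^sub>R u, a] = c * sl3_omega E [u,a]"
  unfolding sl3_omega_def w1_2 by (simp_all add: L algebra_simps)
lemma rho_lin: "sl3_rho E [u + s *\<^sub>R w1 - t *\<^sub>R w2, a, b] = sl3_rho E [u,a,b] + s * sl3_rho E [w1,a,b] - t * sl3_rho E [w2,a,b]"
  "sl3_rho E [c *\<^sub>R u, a, b] = c * sl3_rho E [u,a,b]"
  unfolding sl3_rho_def w1_3 by (simp_all add: L algebra_simps)
lemma rhohat_lin: "sl3_rhohat E [u + s *\<^sub>R w1 - t *\<^sub>R w2, a, b] = sl3_rhohat E [u,a,b] + s * sl3_rhohat E [w1,a,b] - t * sl3_rhohat E [w2,a,b]"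
  "sl3_rhohat E [c *\<^sub>R u, a, b] = c * sl3_rhohat E [u,a,b]"
  unfolding sl3_rhohat_def w1_3 by (simp_all add: L algebra_simps)
lemma gamma_lin: "sl3_gamma E [u + s *\<^sub>R w1 - t *\<^sub>R w2, a, b] = sl3_gamma E [u,a,b] + s * sl3_gamma E [w1,a,b] - t * sl3_gamma E [w2,a,b]"
  "sl3_gamma E [c *\<^sub>R u, a, b] = c * sl3_gamma E [u,a,b]"
  unfolding sl3_gamma_def w1_3 by (simp_all add: L algebra_simps)
lemma Q_lin: "wedge 2 2 (sl3_omega E) (sl3_omega E) [u + s *\<^sub>R w1 - t *\<^sub>R w2, a, b, d] = wedge 2 2 (sl3_omega E) (sl3_omega E) [u,a,b,d]
   + s * wedge 2 2 (sl3_omega E) (sl3_omega E) [w1,a,b,d] - t * wedge 2 2 (sl3_omega E) (sl3_omega E) [w2,a,b,d]"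
  "wedge 2 2 (sl3_omega E) (sl3_omega E) [c *\<^sub>R u, a, b, d] = c * wedge 2 2 (sl3_omega E) (sl3_omega E) [u,a,b,d]"
  unfolding Q_expl w1_4 by (simp_all add: L algebra_simps)
end


declare One_nat_def [simp del]

lemma I1: assumes "g 1 x = 0" "g 1 y = 0" "g 1 z = 0"
  shows "so4_alpha g [x,y,z] = sqrt 6/3 * sl3_rho (Eg g) [x,y,z]"
  unfolding alpha_expl sl3_rho_def w21 w1_1 w1_2 w1_3 
  by (simp add: so4_om_def Eg_def assms s6 algebra_simps sq2 sq3 w1_2 add_divide_distrib diff_divide_distrib)

context
  fixes g :: "nat \<Rightarrow> 'a::real_vector \<Rightarrow> real" and \<alpha> \<beta> :: "'a form" and v :: 'a
  assumes h\<alpha>: "\<forall>xs. length xs = 3 \<longrightarrow> \<alpha> xs = so4_alpha g xs"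
   and h\<beta>: "\<forall>xs. length xs = 4 \<longrightarrow> \<beta> xs = so4_beta g xs"
   and gv: "g 1 v = 1" "g 2 v = 0" "g 3 v = 0" "g 4 v = 0" "g 5 v = 0" "g 6 v = 0" "g 7 v = 0"
begin

lemma A1: "g 1 x = 0 \<Longrightarrow> g 1 y = 0 \<Longrightarrow> g 1 z = 0 \<Longrightarrow> \<alpha> [x,y,z] = sqrt 6/3 * sl3_rho (Eg g) [x,y,z]"
  using h\<alpha> I1 by simp

lemma A3: "g 1 x = 0 \<Longrightarrow> g 1 z = 0 \<Longrightarrow> \<alpha> [x,v,z] = sqrt 3/3 * sl3_omega (Eg g) [x,z]"
  using h\<alpha> I3b[of g x z v] gv by (simp add: sq3 mult.assoc[symmetric])

lemma A4: "g 1 x = 0 \<Longrightarrow> g 1 z = 0 \<Longrightarrow> sl3_omega (Eg g) [x,z] = - sqrt 3 * \<alpha> [v,x,z]"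
  using h\<alpha> I3[of g x z v] gv by simp

lemma B2: "g 1 x = 0 \<Longrightarrow> g 1 y = 0 \<Longrightarrow> g 1 z = 0 \<Longrightarrow> g 1 u = 0 \<Longrightarrow>
   \<beta> [x,y,z,u] = - 1/6 * wedge 2 2 (sl3_omega (Eg g)) (sl3_omega (Eg g)) [x,y,z,u]"
  using h\<beta> I2 by simp

lemma B4: "g 1 x = 0 \<Longrightarrow> g 1 y = 0 \<Longrightarrow> g 1 z = 0 \<Longrightarrow>
   \<beta> [x,v,y,z] = (sqrt 2/3) * (sl3_rhohat (Eg g) [x,y,z] + 2 * sl3_gamma (Eg g) [x,y,z])"
  using h\<beta> I4b[of g x y z v] gv by simp

context
  fixes br :: "'a \<Rightarrow> 'a \<Rightarrow> 'a"
  assumes sub: "\<And>x y. g 1 x = 0 \<Longrightarrow> g 1 y = 0 \<Longrightarrow> g 1 (br x y) = 0"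
begin

lemma drho: assumes d\<alpha>: "\<forall>xs. length xs = 4 \<longrightarrow> dform br \<alpha> xs = 0"
  and n: "g 1 x0 = 0" "g 1 x1 = 0" "g 1 x2 = 0" "g 1 x3 = 0"
  shows "dform br (sl3_rho (Eg g)) [x0,x1,x2,x3] = 0"
proof -
  have "dform br \<alpha> [x0,x1,x2,x3] = sqrt 6/3 * dform br (sl3_rho (Eg g)) [x0,x1,x2,x3]"
    unfolding dform_4 by (simp add: A1 sub n algebra_simps)
  then show ?thesis using d\<alpha> by simp
qed

lemma dQ: assumes d\<beta>: "\<forall>xs. length xs = 5 \<longrightarrow> dform br \<beta> xs = 0"
  and n: "g 1 x0 = 0" "g 1 x1 = 0" "g 1 x2 = 0" "g 1 x3 = 0" "g 1 x4 = 0"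
  shows "dform br (wedge 2 2 (sl3_omega (Eg g)) (sl3_omega (Eg g))) [x0,x1,x2,x3,x4] = 0"
proof -
  have "dform br \<beta> [x0,x1,x2,x3,x4] = - 1/6 * dform br (wedge 2 2 (sl3_omega (Eg g)) (sl3_omega (Eg g))) [x0,x1,x2,x3,x4]"
    unfolding dform_5 by (simp add: B2 sub n algebra_simps)
  then show ?thesis using d\<beta> by simp
qed
end

context
  fixes br :: "'a \<Rightarrow> 'a \<Rightarrow> 'a"
  assumes bil: "bilinear br"
   and idl: "\<And>x y. g 1 y = 0 \<Longrightarrow> g 1 (br x y) = 0"
   and lE: "linE (Eg g)"
begin

lemma ideal1: assumes d\<alpha>: "\<forall>xs. length xs = 4 \<longrightarrow> dform br \<alpha> xs = 0"
  and n: "g 1 x1 = 0" "g 1 x2 = 0" "g 1 x3 = 0"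
  shows "der_act (\<lambda>x. br (sqrt 2 *\<^sub>R v) x) (sl3_rho (Eg g)) [x1,x2,x3] + dform br (sl3_omega (Eg g)) [x1,x2,x3] = 0"
proof -
  have sc: "\<And>x. br (sqrt 2 *\<^sub>R v) x = sqrt 2 *\<^sub>R br v x" using bilinear_lmul[OF bil] by simp
  have alt: "sl3_rho (Eg g) [x1, br (sqrt 2 *\<^sub>R v) x2, x3] = - sl3_rho (Eg g) [br (sqrt 2 *\<^sub>R v) x2, x1, x3]"
     "sl3_rho (Eg g) [x1, x2, br (sqrt 2 *\<^sub>R v) x3] = sl3_rho (Eg g) [br (sqrt 2 *\<^sub>R v) x3, x1, x2]"
    by (rule rho_alt)+
  have "der_act (\<lambda>x. br (sqrt 2 *\<^sub>R v) x) (sl3_rho (Eg g)) [x1,x2,x3] + dform br (sl3_omega (Eg g)) [x1,x2,x3]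
     = sqrt 3 * dform br \<alpha> [v,x1,x2,x3]"
    unfolding der_act_3 dform_3 dform_4 alt
    unfolding sc linE.rho_lin(2)[OF lE]
    by (simp add: A1 A3 idl n algebra_simps s6 sq3)
  then show ?thesis using d\<alpha> by simp
qed

lemma ideal2: assumes d\<beta>: "\<forall>xs. length xs = 5 \<longrightarrow> dform br \<beta> xs = 0"
  and n: "g 1 x1 = 0" "g 1 x2 = 0" "g 1 x3 = 0" "g 1 x4 = 0"
  shows "- 1/4 * der_act (\<lambda>x. br (sqrt 2 *\<^sub>R v) x) (wedge 2 2 (sl3_omega (Eg g)) (sl3_omega (Eg g))) [x1,x2,x3,x4]
     + dform br (sl3_rhohat (Eg g)) [x1,x2,x3,x4] + 2 * dform br (sl3_gamma (Eg g)) [x1,x2,x3,x4] = 0"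
proof -
  have sc: "\<And>x. br (sqrt 2 *\<^sub>R v) x = sqrt 2 *\<^sub>R br v x" using bilinear_lmul[OF bil] by simp
  have alt: "wedge 2 2 (sl3_omega (Eg g)) (sl3_omega (Eg g)) [x1, br (sqrt 2 *\<^sub>R v) x2, x3, x4] = - wedge 2 2 (sl3_omega (Eg g)) (sl3_omega (Eg g)) [br (sqrt 2 *\<^sub>R v) x2, x1, x3, x4]"
    "wedge 2 2 (sl3_omega (Eg g)) (sl3_omega (Eg g)) [x1, x2, br (sqrt 2 *\<^sub>R v) x3, x4] = wedge 2 2 (sl3_omega (Eg g)) (sl3_omega (Eg g)) [br (sqrt 2 *\<^sub>R v) x3, x1, x2, x4]"
    "wedge 2 2 (sl3_omega (Eg g)) (sl3_omega (Eg g)) [x1, x2, x3, br (sqrt 2 *\<^sub>R v) x4] = - wedge 2 2 (sl3_omega (Eg g)) (sl3_omega (Eg g)) [br (sqrt 2 *\<^sub>R v) x4, x1, x2, x3]"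
    by (rule Q_alt)+
  have "- 1/4 * der_act (\<lambda>x. br (sqrt 2 *\<^sub>R v) x) (wedge 2 2 (sl3_omega (Eg g)) (sl3_omega (Eg g))) [x1,x2,x3,x4]
     + dform br (sl3_rhohat (Eg g)) [x1,x2,x3,x4] + 2 * dform br (sl3_gamma (Eg g)) [x1,x2,x3,x4]
     = (3 * sqrt 2 / 2) * dform br \<beta> [v,x1,x2,x3,x4]"
    unfolding der_act_4 dform_4 dform_5 alt
    unfolding sc linE.Q_lin(2)[OF lE]
    by (simp add: B2 B4 idl n algebra_simps sq2)
  then show ?thesis using d\<beta> by simp
qed
end
end


declare One_nat_def [simp del]

lemma EgGe: "Eg (Ge E) 1 p = E 1 (fst p)" "Eg (Ge E) 2 p = E 2 (fst p)" "Eg (Ge E) 3 p = E 3 (fst p)"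
  "Eg (Ge E) 4 p = E 4 (fst p)" "Eg (Ge E) 5 p = E 5 (fst p)" "Eg (Ge E) 6 p = E 6 (fst p)"
  by (simp_all add: Eg_def Ge_def algebra_simps sq2 sq3 add_divide_distrib diff_divide_distrib)

lemma Dbeta: "so4_beta (Ge E) [p,q,r,s] = - (2/3) * (snd p * (sl3_rhohat E [fst q, fst r, fst s] + 2 * sl3_gamma E [fst q, fst r, fst s])
   - snd q * (sl3_rhohat E [fst p, fst r, fst s] + 2 * sl3_gamma E [fst p, fst r, fst s])
   + snd r * (sl3_rhohat E [fst p, fst q, fst s] + 2 * sl3_gamma E [fst p, fst q, fst s])
   - snd s * (sl3_rhohat E [fst p, fst q, fst r] + 2 * sl3_gamma E [fst p, fst q, fst r]))
   - 1/6 * wedge 2 2 (sl3_omega E) (sl3_omega E) [fst p, fst q, fst r, fst s]"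
proof -
  have r: "\<And>p q r. sl3_rhohat (Eg (Ge E)) [p,q,r] = sl3_rhohat E [fst p, fst q, fst r]"
    by (simp add: sl3_rhohat_def w1_3 EgGe)
  have g: "\<And>p q r. sl3_gamma (Eg (Ge E)) [p,q,r] = sl3_gamma E [fst p, fst q, fst r]"
    by (simp add: sl3_gamma_def w1_3 EgGe)
  have Q: "wedge 2 2 (sl3_omega (Eg (Ge E))) (sl3_omega (Eg (Ge E))) [p,q,r,s] = wedge 2 2 (sl3_omega E) (sl3_omega E) [fst p, fst q, fst r, fst s]"
    by (simp add: Q_expl w1_4 EgGe)
  have G1: "\<And>p. Ge E 1 p = sqrt 2 * snd p" by (simp add: Ge_def)
  show ?thesis unfolding GDbeta r g Q G1 by (simp add: algebra_simps sq2)
qed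

context
  fixes E :: "nat \<Rightarrow> 'n::real_vector \<Rightarrow> real" and brn :: "'n \<Rightarrow> 'n \<Rightarrow> 'n" and b :: "'n \<Rightarrow> 'n"
  assumes lE: "linE E"
begin

lemma dalpha_sd:
  assumes H1: "\<forall>xs. length xs = 4 \<longrightarrow> dform brn (sl3_rho E) xs = 0"
   and H2: "\<forall>xs. length xs = 3 \<longrightarrow> der_act b (sl3_rho E) xs + dform brn (sl3_omega E) xs = 0"
  shows "dform (semidirect brn b) (so4_alpha (Ge E)) [(x0,t0),(x1,t1),(x2,t2),(x3,t3)] = 0"
proof -
  let ?K = "\<lambda>xs. der_act b (sl3_rho E) xs + dform brn (sl3_omega E) xs"
  have alt: "sl3_rho E [x1, b x2, x3] = - sl3_rho E [b x2, x1, x3]" "sl3_rho E [x1, x2, b x3] = sl3_rho E [b x3, x1, x2]"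
    "sl3_rho E [x0, b x2, x3] = - sl3_rho E [b x2, x0, x3]" "sl3_rho E [x0, x2, b x3] = sl3_rho E [b x3, x0, x2]"
    "sl3_rho E [x0, b x1, x3] = - sl3_rho E [b x1, x0, x3]" "sl3_rho E [x0, x1, b x3] = sl3_rho E [b x3, x0, x1]"
    "sl3_rho E [x0, b x1, x2] = - sl3_rho E [b x1, x0, x2]" "sl3_rho E [x0, x1, b x2] = sl3_rho E [b x2, x0, x1]"
    by (rule rho_alt)+
  have "dform (semidirect brn b) (so4_alpha (Ge E)) [(x0,t0),(x1,t1),(x2,t2),(x3,t3)]
     = sqrt 6/3 * dform brn (sl3_rho E) [x0,x1,x2,x3] + sqrt 6/3 * (t0 * ?K [x1,x2,x3] - t1 * ?K [x0,x2,x3]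
        + t2 * ?K [x0,x1,x3] - t3 * ?K [x0,x1,x2])"
    unfolding dform_4 dform_3 der_act_3 semidirect_def Dalpha fst_conv snd_conv alt
    unfolding linE.rho_lin(1)[OF lE] linE.om_lin(1)[OF lE]
    by (simp add: algebra_simps)
  then show ?thesis using H1 H2 by simp
qed

lemma dbeta_sd:
  assumes H1: "\<forall>xs. length xs = 5 \<longrightarrow> dform brn (wedge 2 2 (sl3_omega E) (sl3_omega E)) xs = 0"
   and H2: "\<forall>xs. length xs = 4 \<longrightarrow> - 1/4 * der_act b (wedge 2 2 (sl3_omega E) (sl3_omega E)) xs
        + dform brn (sl3_rhohat E) xs + 2 * dform brn (sl3_gamma E) xs = 0"
  shows "dform (semidirect brn b) (so4_beta (Ge E)) [(x0,t0),(x1,t1),(x2,t2),(x3,t3),(x4,t4)] = 0"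
proof -
  let ?Q = "wedge 2 2 (sl3_omega E) (sl3_omega E)"
  let ?K = "\<lambda>xs. - 1/4 * der_act b ?Q xs + dform brn (sl3_rhohat E) xs + 2 * dform brn (sl3_gamma E) xs"
  have alt: "\<And>a c d e. ?Q [a, b c, d, e] = - ?Q [b c, a, d, e]"
            "\<And>a c d e. ?Q [a, c, b d, e] = ?Q [b d, a, c, e]"
            "\<And>a c d e. ?Q [a, c, d, b e] = - ?Q [b e, a, c, d]"
    by (rule Q_alt)+
  have "dform (semidirect brn b) (so4_beta (Ge E)) [(x0,t0),(x1,t1),(x2,t2),(x3,t3),(x4,t4)]
     = - 1/6 * dform brn ?Q [x0,x1,x2,x3,x4] + 2/3 * (t0 * ?K [x1,x2,x3,x4] - t1 * ?K [x0,x2,x3,x4]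
        + t2 * ?K [x0,x1,x3,x4] - t3 * ?K [x0,x1,x2,x4] + t4 * ?K [x0,x1,x2,x3])"
    unfolding dform_5 dform_4 der_act_4 semidirect_def Dbeta fst_conv snd_conv alt
    unfolding linE.Q_lin(1)[OF lE] linE.rhohat_lin(1)[OF lE] linE.gamma_lin(1)[OF lE]
    by (simp add: algebra_simps)
  then show ?thesis using H1 H2 by simp
qed
end


declare One_nat_def [simp del]

definition Gr :: "(nat \<Rightarrow> real) \<Rightarrow> (nat \<Rightarrow> 'a \<Rightarrow> real) \<Rightarrow> nat \<Rightarrow> 'a \<Rightarrow> real" where
"Gr a e k x = (if k = 1 then a 1 * e 1 x + a 2 * e 2 x + a 3 * e 3 x + a 4 * e 4 x
  else if k = 2 then - a 2 * e 1 x + a 1 * e 2 x + a 4 * e 3 x - a 3 * e 4 x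
  else if k = 3 then - a 3 * e 1 x - a 4 * e 2 x + a 1 * e 3 x + a 2 * e 4 x
  else if k = 4 then - a 4 * e 1 x + a 3 * e 2 x - a 2 * e 3 x + a 1 * e 4 x
  else e k x)"

lemma sum14: "(\<Sum>i=1..4. f i) = f 1 + f 2 + f 3 + f (4::nat)"
proof -
  have "{1..4::nat} = {1,2,3,4}" by auto
  then show ?thesis by (simp add: add.assoc)
qed

lemma Gr_ge5: "Gr a e 5 = e 5" "Gr a e 6 = e 6" "Gr a e 7 = e 7"
  by (simp_all add: Gr_def fun_eq_iff)

lemma om_rot: "so4_om (Gr a e) s [x,y] = (a 1^2 + a 2^2 + a 3^2 + a 4^2) * so4_om e s [x,y]"
  unfolding so4_om_def w1_2 by (simp add: Gr_def algebra_simps power2_eq_square)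

lemma W4om: "wedge1 [h 1, h 2, h 3, h 4] [x,y,z,u] = -1/2 * wedge 2 2 (so4_om h 1) (so4_om h 1) [x,y,z,u]"
  unfolding w22 so4_om_def w1_2 w1_4 by (simp add: algebra_simps add_divide_distrib diff_divide_distrib)

lemma alpha_rot: assumes S: "a 1^2 + a 2^2 + a 3^2 + a 4^2 = 1"
  shows "so4_alpha (Gr a e) [x,y,z] = so4_alpha e [x,y,z]"
  unfolding alpha_expl w21 om_rot S Gr_ge5 by simp

lemma beta_rot: assumes S: "a 1^2 + a 2^2 + a 3^2 + a 4^2 = 1"
  shows "so4_beta (Gr a e) [x,y,z,u] = so4_beta e [x,y,z,u]"
  unfolding beta_expl W4om[of "Gr a e"] W4om[of e]
  unfolding w22 om_rot S Gr_ge5 by simp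

lemma Gr_inv: "a 1 * Gr a e 1 x - a 2 * Gr a e 2 x - a 3 * Gr a e 3 x - a 4 * Gr a e 4 x = (a 1^2 + a 2^2 + a 3^2 + a 4^2) * e 1 x"
  "a 2 * Gr a e 1 x + a 1 * Gr a e 2 x - a 4 * Gr a e 3 x + a 3 * Gr a e 4 x = (a 1^2 + a 2^2 + a 3^2 + a 4^2) * e 2 x"
  "a 3 * Gr a e 1 x + a 4 * Gr a e 2 x + a 1 * Gr a e 3 x - a 2 * Gr a e 4 x = (a 1^2 + a 2^2 + a 3^2 + a 4^2) * e 3 x"
  "a 4 * Gr a e 1 x - a 3 * Gr a e 2 x + a 2 * Gr a e 3 x + a 1 * Gr a e 4 x = (a 1^2 + a 2^2 + a 3^2 + a 4^2) * e 4 x"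
  by (simp_all add: Gr_def algebra_simps power2_eq_square)

lemma lin_comb4: fixes f1 f2 f3 f4 :: "'a::real_vector \<Rightarrow> real" assumes "linear f1" "linear f2" "linear f3" "linear f4"
  shows "linear (\<lambda>x. c1 * f1 x + c2 * f2 x + c3 * f3 x + c4 * f4 x)"
  by (rule linearI) (simp_all add: linear_add[OF assms(1)] linear_add[OF assms(2)] linear_add[OF assms(3)] linear_add[OF assms(4)]
     linear_scale[OF assms(1)] linear_scale[OF assms(2)] linear_scale[OF assms(3)] linear_scale[OF assms(4)] algebra_simps)

lemma lin_comb2: fixes f1 f2 :: "'a::real_vector \<Rightarrow> real" assumes "linear f1" "linear f2"
  shows "linear (\<lambda>x. c1 * f1 x + c2 * f2 x)"
  by (rule linearI) (simp_all add: linear_add[OF assms(1)] linear_add[OF assms(2)]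
     linear_scale[OF assms(1)] linear_scale[OF assms(2)] algebra_simps)

lemma Gr_lin: assumes l: "\<forall>i\<in>{1..7}. linear (e i)" and k: "k \<in> {1..7}"
  shows "linear (Gr a e k)"
proof -
  have l1: "linear (e 1)" "linear (e 2)" "linear (e 3)" "linear (e 4)" using l by auto
  have "k = 1 \<or> k = 2 \<or> k = 3 \<or> k = 4 \<or> (k \<ge> 5 \<and> k \<le> 7)" using k by auto
  moreover have "linear (Gr a e 1)"
    using lin_comb4[OF l1, of "a 1" "a 2" "a 3" "a 4"] by (simp add: Gr_def[abs_def])
  moreover have "linear (Gr a e 2)"
    using lin_comb4[OF l1, of "- a 2" "a 1" "a 4" "- a 3"] by (simp add: Gr_def[abs_def] algebra_simps)
  moreover have "linear (Gr a e 3)"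
    using lin_comb4[OF l1, of "- a 3" "- a 4" "a 1" "a 2"] by (simp add: Gr_def[abs_def] algebra_simps)
  moreover have "linear (Gr a e 4)"
    using lin_comb4[OF l1, of "- a 4" "a 3" "- a 2" "a 1"] by (simp add: Gr_def[abs_def] algebra_simps)
  moreover have "k \<ge> 5 \<Longrightarrow> k \<le> 7 \<Longrightarrow> linear (Gr a e k)"
  proof -
    assume "k \<ge> 5" "k \<le> 7"
    then have "Gr a e k = e k" by (simp add: Gr_def fun_eq_iff)
    then show ?thesis using l \<open>k \<ge> 5\<close> \<open>k \<le> 7\<close> by auto
  qed
  ultimately show ?thesis by auto
qed

lemma Eg_lin: assumes l: "linear (g 2)" "linear (g 3)" "linear (g 4)" "linear (g 5)" "linear (g 6)" "linear (g 7)"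
  shows "linE (Eg g)"
proof -
  have a: "Eg g 1 = (\<lambda>x. (sqrt 2/2) * g 2 x + (- sqrt 2 * sqrt 3/2) * g 5 x)"
     "Eg g 2 = (\<lambda>x. (- sqrt 2/2) * g 2 x + (- sqrt 2 * sqrt 3/2) * g 5 x)"
     "Eg g 3 = (\<lambda>x. (sqrt 2/2) * g 3 x + (- sqrt 2 * sqrt 3/2) * g 6 x)"
     "Eg g 4 = (\<lambda>x. (- sqrt 2/2) * g 3 x + (- sqrt 2 * sqrt 3/2) * g 6 x)"
     "Eg g 5 = (\<lambda>x. (sqrt 2/2) * g 4 x + (- sqrt 2 * sqrt 3/2) * g 7 x)"
     "Eg g 6 = (\<lambda>x. (- sqrt 2/2) * g 4 x + (- sqrt 2 * sqrt 3/2) * g 7 x)"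
    by (simp_all add: Eg_def fun_eq_iff algebra_simps)
  show ?thesis unfolding linE_def a
    using lin_comb2[OF l(1) l(4)] lin_comb2[OF l(2) l(5)] lin_comb2[OF l(3) l(6)] by blast
qed


lemma ball16: "(\<forall>i\<in>{1..6::nat}. P i) \<longleftrightarrow> P 1 \<and> P 2 \<and> P 3 \<and> P 4 \<and> P 5 \<and> P 6"
proof -
  have "{1..6::nat} = {1,2,3,4,5,6}" by auto
  then show ?thesis by simp
qed
lemma ball17: "(\<forall>i\<in>{1..7::nat}. P i) \<longleftrightarrow> P 1 \<and> P 2 \<and> P 3 \<and> P 4 \<and> P 5 \<and> P 6 \<and> P 7"
proof -
  have "{1..7::nat} = {1,2,3,4,5,6,7}" by auto
  then show ?thesis by simp
qed

lemma solve2: "sqrt 2/2*(A - sqrt 3*B) = 0 \<Longrightarrow> - (sqrt 2/2*(A + sqrt 3*B)) = 0 \<Longrightarrow> A = 0 \<and> B = 0"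
  by (simp add: algebra_simps)

lemma cof1: fixes e :: "nat \<Rightarrow> 'a::real_vector \<Rightarrow> real"
  assumes cof: "coframe 7 UNIV e" and S: "a 1^2 + a 2^2 + a 3^2 + a 4^2 = 1"
  shows "coframe 6 {x. Gr a e 1 x = 0} (Eg (Gr a e))"
proof -
  have l: "\<forall>i\<in>{1..7}. linear (e i)" using cof by (simp add: coframe_def)
  have inj: "\<And>x. (\<forall>i\<in>{1..7}. e i x = 0) \<Longrightarrow> x = 0" using cof by (simp add: coframe_def)
  have sur: "\<And>c. \<exists>x. \<forall>i\<in>{1..7}. e i x = c i" using cof by (simp add: coframe_def)
  have lg: "\<And>k. k \<in> {1..7} \<Longrightarrow> linear (Gr a e k)" using Gr_lin[OF l] by blast
  have lE: "linE (Eg (Gr a e))" by (rule Eg_lin) (simp_all add: lg)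
  show ?thesis unfolding coframe_def
  proof (intro conjI ballI allI impI)
    fix i :: nat assume "i \<in> {1..6}"
    then have "i = 1 \<or> i = 2 \<or> i = 3 \<or> i = 4 \<or> i = 5 \<or> i = 6" by auto
    then show "linear (Eg (Gr a e) i)" using lE unfolding linE_def by auto
  next
    fix x assume x: "x \<in> {x. Gr a e 1 x = 0}" and z: "\<forall>i\<in>{1..6}. Eg (Gr a e) i x = 0"
    have z': "Eg (Gr a e) 1 x = 0" "Eg (Gr a e) 2 x = 0" "Eg (Gr a e) 3 x = 0"
      "Eg (Gr a e) 4 x = 0" "Eg (Gr a e) 5 x = 0" "Eg (Gr a e) 6 x = 0" using z unfolding ball16 by auto
    have g25: "Gr a e 2 x = 0 \<and> Gr a e 5 x = 0" using z'(1,2) by (intro solve2) (simp_all add: Eg_def)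
    have g36: "Gr a e 3 x = 0 \<and> Gr a e 6 x = 0" using z'(3,4) by (intro solve2) (simp_all add: Eg_def)
    have g47: "Gr a e 4 x = 0 \<and> Gr a e 7 x = 0" using z'(5,6) by (intro solve2) (simp_all add: Eg_def)
    have g1: "Gr a e 1 x = 0" using x by simp
    have "e 1 x = 0" "e 2 x = 0" "e 3 x = 0" "e 4 x = 0"
      using Gr_inv[of a e x] S g1 g25 g36 g47 by simp_all
    moreover have "e 5 x = 0" "e 6 x = 0" "e 7 x = 0" using g25 g36 g47 by (simp_all add: Gr_ge5)
    ultimately show "x = 0" by (intro inj) (simp add: ball17)
  next
    fix c :: "nat \<Rightarrow> real"
    define d where "d k = (if k = 2 then sqrt 2/2*(c 1 - c 2) else if k = 3 then sqrt 2/2*(c 3 - c 4)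
       else if k = 4 then sqrt 2/2*(c 5 - c 6) else if k = 5 then - (sqrt 2 * sqrt 3/6) * (c 1 + c 2)
       else if k = 6 then - (sqrt 2 * sqrt 3/6) * (c 3 + c 4) else if k = 7 then - (sqrt 2 * sqrt 3/6) * (c 5 + c 6)
       else 0)" for k :: nat
    define h where "h k = (if k = 1 then a 1 * d 1 - a 2 * d 2 - a 3 * d 3 - a 4 * d 4
       else if k = 2 then a 2 * d 1 + a 1 * d 2 - a 4 * d 3 + a 3 * d 4
       else if k = 3 then a 3 * d 1 + a 4 * d 2 + a 1 * d 3 - a 2 * d 4
       else if k = 4 then a 4 * d 1 - a 3 * d 2 + a 2 * d 3 + a 1 * d 4 else d k)" for k :: nat
    obtain x where x: "\<forall>i\<in>{1..7}. e i x = h i" using sur by blast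
    have xv: "e 1 x = h 1" "e 2 x = h 2" "e 3 x = h 3" "e 4 x = h 4" "e 5 x = h 5" "e 6 x = h 6" "e 7 x = h 7"
      using x unfolding ball17 by auto
    have gx: "Gr a e 1 x = (a 1^2 + a 2^2 + a 3^2 + a 4^2) * d 1" "Gr a e 2 x = (a 1^2 + a 2^2 + a 3^2 + a 4^2) * d 2"
      "Gr a e 3 x = (a 1^2 + a 2^2 + a 3^2 + a 4^2) * d 3" "Gr a e 4 x = (a 1^2 + a 2^2 + a 3^2 + a 4^2) * d 4"
      by (simp_all add: Gr_def xv h_def algebra_simps power2_eq_square)
    have gx5: "Gr a e 5 x = d 5" "Gr a e 6 x = d 6" "Gr a e 7 x = d 7" by (simp_all add: Gr_ge5 xv h_def)
    have d1: "d 1 = 0" by (simp add: d_def)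
    have gx': "Gr a e 1 x = d 1" "Gr a e 2 x = d 2" "Gr a e 3 x = d 3" "Gr a e 4 x = d 4" using gx S by simp_all
    show "\<exists>x\<in>{x. Gr a e 1 x = 0}. \<forall>i\<in>{1..6}. Eg (Gr a e) i x = c i"
    proof (intro bexI)
      show "x \<in> {x. Gr a e 1 x = 0}" using gx(1) d1 by simp
      show "\<forall>i\<in>{1..6}. Eg (Gr a e) i x = c i" unfolding ball16
        by (simp add: Eg_def gx' gx5 d_def algebra_simps sq2 sq3, simp add: field_simps)
    qed
  qed
qed


declare One_nat_def [simp del]

lemma ball16': "(\<forall>i\<in>{1..6::nat}. P i) \<longleftrightarrow> P 1 \<and> P 2 \<and> P 3 \<and> P 4 \<and> P 5 \<and> P 6"
proof -
  have "{1..6::nat} = {1,2,3,4,5,6}" by auto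
  then show ?thesis by simp
qed
lemma ball17': "(\<forall>i\<in>{1..7::nat}. P i) \<longleftrightarrow> P 1 \<and> P 2 \<and> P 3 \<and> P 4 \<and> P 5 \<and> P 6 \<and> P 7"
proof -
  have "{1..7::nat} = {1,2,3,4,5,6,7}" by auto
  then show ?thesis by simp
qed

lemma lin_pair: fixes f h :: "'n::real_vector \<Rightarrow> real" assumes "linear f" "linear h"
  shows "linear (\<lambda>p::'n \<times> real. c * (f (fst p) + d * h (fst p)))"
  by (rule linearI) (simp_all add: linear_add[OF assms(1)] linear_add[OF assms(2)]
     linear_scale[OF assms(1)] linear_scale[OF assms(2)] algebra_simps)

lemma cof2: fixes E :: "nat \<Rightarrow> 'n::real_vector \<Rightarrow> real"
  assumes cof: "coframe 6 UNIV E"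
  shows "coframe 7 UNIV (Ge E)"
proof -
  have l: "linear (E 1)" "linear (E 2)" "linear (E 3)" "linear (E 4)" "linear (E 5)" "linear (E 6)"
    using cof by (simp_all add: coframe_def ball16')
  have inj: "\<And>x. (\<forall>i\<in>{1..6}. E i x = 0) \<Longrightarrow> x = 0" using cof by (simp add: coframe_def)
  have sur: "\<And>c. \<exists>x. \<forall>i\<in>{1..6}. E i x = c i" using cof by (simp add: coframe_def)
  have G: "Ge E 2 = (\<lambda>p. sqrt 2/2 * (E 1 (fst p) + (-1) * E 2 (fst p)))"
    "Ge E 3 = (\<lambda>p. sqrt 2/2 * (E 3 (fst p) + (-1) * E 4 (fst p)))"
    "Ge E 4 = (\<lambda>p. sqrt 2/2 * (E 5 (fst p) + (-1) * E 6 (fst p)))"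
    "Ge E 5 = (\<lambda>p. - (sqrt 2 * sqrt 3/6) * (E 1 (fst p) + 1 * E 2 (fst p)))"
    "Ge E 6 = (\<lambda>p. - (sqrt 2 * sqrt 3/6) * (E 3 (fst p) + 1 * E 4 (fst p)))"
    "Ge E 7 = (\<lambda>p. - (sqrt 2 * sqrt 3/6) * (E 5 (fst p) + 1 * E 6 (fst p)))"
    by (simp_all add: Ge_def fun_eq_iff)
  have G1: "linear (Ge E 1)"
    by (rule linearI) (simp_all add: Ge_def algebra_simps)
  show ?thesis unfolding coframe_def
  proof (intro conjI ballI allI impI)
    fix i :: nat assume "i \<in> {1..7}"
    then have "i = 1 \<or> i = 2 \<or> i = 3 \<or> i = 4 \<or> i = 5 \<or> i = 6 \<or> i = 7" by auto
    moreover have "linear (Ge E 2)" "linear (Ge E 5)" unfolding G by (rule lin_pair[OF l(1) l(2)])+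
    moreover have "linear (Ge E 3)" "linear (Ge E 6)" unfolding G by (rule lin_pair[OF l(3) l(4)])+
    moreover have "linear (Ge E 4)" "linear (Ge E 7)" unfolding G by (rule lin_pair[OF l(5) l(6)])+
    ultimately show "linear (Ge E i)" using G1 by auto
  next
    fix p :: "'n \<times> real" assume z: "\<forall>i\<in>{1..7}. Ge E i p = 0"
    have z': "Ge E 1 p = 0" "Ge E 2 p = 0" "Ge E 3 p = 0" "Ge E 4 p = 0" "Ge E 5 p = 0" "Ge E 6 p = 0" "Ge E 7 p = 0"
      using z unfolding ball17' by auto
    have t: "snd p = 0" using z'(1) by (simp add: Ge_def)
    have "E 1 (fst p) = 0 \<and> E 2 (fst p) = 0" using z'(2,5) by (simp add: Ge_def algebra_simps)
    moreover have "E 3 (fst p) = 0 \<and> E 4 (fst p) = 0" using z'(3,6) by (simp add: Ge_def algebra_simps)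
    moreover have "E 5 (fst p) = 0 \<and> E 6 (fst p) = 0" using z'(4,7) by (simp add: Ge_def algebra_simps)
    ultimately have "fst p = 0" by (intro inj) (simp add: ball16')
    then show "p = 0" using t by (simp add: prod_eq_iff)
  next
    fix c :: "nat \<Rightarrow> real"
    define d where "d k = (if k = 1 then sqrt 2/2*(c 2 - sqrt 3 * c 5) else if k = 2 then - (sqrt 2/2*(c 2 + sqrt 3 * c 5))
      else if k = 3 then sqrt 2/2*(c 3 - sqrt 3 * c 6) else if k = 4 then - (sqrt 2/2*(c 3 + sqrt 3 * c 6))
      else if k = 5 then sqrt 2/2*(c 4 - sqrt 3 * c 7) else - (sqrt 2/2*(c 4 + sqrt 3 * c 7)))" for k :: nat
    obtain x where x: "\<forall>i\<in>{1..6}. E i x = d i" using sur by blast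
    have xv: "E 1 x = d 1" "E 2 x = d 2" "E 3 x = d 3" "E 4 x = d 4" "E 5 x = d 5" "E 6 x = d 6"
      using x unfolding ball16' by auto
    show "\<exists>p\<in>UNIV. \<forall>i\<in>{1..7}. Ge E i p = c i"
    proof
      show "\<forall>i\<in>{1..7}. Ge E i (x, c 1 / sqrt 2) = c i" unfolding ball17'
        by (simp add: Ge_def xv d_def algebra_simps sq2 sq3)
    qed simp
  qed
qed


declare One_nat_def [simp del]

lemma len3: "length xs = 3 \<Longrightarrow> \<exists>x y z. xs = [x,y,z]"
  by (auto simp: numeral_eq_Suc length_Suc_conv)
lemma len4: "length xs = 4 \<Longrightarrow> \<exists>x y z u. xs = [x,y,z,u]"
  by (auto simp: numeral_eq_Suc length_Suc_conv)
lemma len5: "length xs = 5 \<Longrightarrow> \<exists>x y z u w. xs = [x,y,z,u,w]"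
  by (auto simp: numeral_eq_Suc length_Suc_conv)
lemma len2: "length xs = 2 \<Longrightarrow> \<exists>x y. xs = [x,y]"
  by (auto simp: numeral_eq_Suc length_Suc_conv)

lemma part1:
  fixes br :: "'a::euclidean_space \<Rightarrow> 'a \<Rightarrow> 'a" and e :: "nat \<Rightarrow> 'a \<Rightarrow> real" and \<alpha> \<beta> :: "'a form"
    and a :: "nat \<Rightarrow> real" and v :: 'a
  assumes lie: "lie_algebra br" and cof: "coframe 7 UNIV e"
    and h\<alpha>0: "\<forall>xs. length xs = 3 \<longrightarrow> \<alpha> xs = so4_alpha e xs"
    and h\<beta>0: "\<forall>xs. length xs = 4 \<longrightarrow> \<beta> xs = so4_beta e xs"
    and d\<alpha>: "\<forall>xs. length xs = 4 \<longrightarrow> dform br \<alpha> xs = 0"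
    and d\<beta>: "\<forall>xs. length xs = 5 \<longrightarrow> dform br \<beta> xs = 0"
    and S0: "(\<Sum>i=1..4. (a i)\<^sup>2) = 1"
    and ev: "\<forall>j\<in>{1..7}. e j v = (if j \<le> 4 then a j else 0)"
    and sub0: "\<forall>x y. (\<Sum>i=1..4. a i * e i x) = 0 \<longrightarrow> (\<Sum>i=1..4. a i * e i y) = 0 \<longrightarrow>
            (\<Sum>i=1..4. a i * e i (br x y)) = 0"
  shows "(let n = {x. (\<Sum>i=1..4. a i * e i x) = 0} in
      \<exists>E. coframe 6 n E \<and>
        (\<forall>xs. length xs = 3 \<and> set xs \<subseteq> n \<longrightarrow> \<alpha> xs = sqrt 6 / 3 * sl3_rho E xs) \<and>
        (\<forall>xs. length xs = 4 \<and> set xs \<subseteq> n \<longrightarrow>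
              \<beta> xs = - 1/6 * wedge 2 2 (sl3_omega E) (sl3_omega E) xs) \<and>
        (\<forall>xs. length xs = 2 \<and> set xs \<subseteq> n \<longrightarrow> sl3_omega E xs = - sqrt 3 * \<alpha> (v # xs)) \<and>
        (\<forall>xs. length xs = 4 \<and> set xs \<subseteq> n \<longrightarrow> dform br (sl3_rho E) xs = 0) \<and>
        (\<forall>xs. length xs = 5 \<and> set xs \<subseteq> n \<longrightarrow>
              dform br (wedge 2 2 (sl3_omega E) (sl3_omega E)) xs = 0) \<and>
        ((\<forall>x y. y \<in> n \<longrightarrow> br x y \<in> n) \<longrightarrow>
          (let b = (\<lambda>x. br (sqrt 2 *\<^sub>R v) x) in
           (\<forall>xs. length xs = 3 \<and> set xs \<subseteq> n \<longrightarrow>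
              der_act b (sl3_rho E) xs + dform br (sl3_omega E) xs = 0) \<and>
           (\<forall>xs. length xs = 4 \<and> set xs \<subseteq> n \<longrightarrow>
              - 1/4 * der_act b (wedge 2 2 (sl3_omega E) (sl3_omega E)) xs
              + dform br (sl3_rhohat E) xs + 2 * dform br (sl3_gamma E) xs = 0))))"
proof -
  define g where "g = Gr a e"
  have lin: "\<forall>i\<in>{1..7}. linear (e i)" using cof by (simp add: coframe_def)
  have S: "a 1^2 + a 2^2 + a 3^2 + a 4^2 = 1" using S0 by (simp add: sum14)
  have nsum: "\<And>x. (\<Sum>i=1..4. a i * e i x) = g 1 x" by (simp add: sum14 g_def Gr_def)
  have h\<alpha>: "\<forall>xs. length xs = 3 \<longrightarrow> \<alpha> xs = so4_alpha g xs"
  proof (intro allI impI)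
    fix xs :: "'a list" assume "length xs = 3"
    then obtain x y z where xs: "xs = [x,y,z]" using len3 by blast
    show "\<alpha> xs = so4_alpha g xs" using h\<alpha>0 unfolding xs g_def alpha_rot[OF S] by simp
  qed
  have h\<beta>: "\<forall>xs. length xs = 4 \<longrightarrow> \<beta> xs = so4_beta g xs"
  proof (intro allI impI)
    fix xs :: "'a list" assume "length xs = 4"
    then obtain x y z u where xs: "xs = [x,y,z,u]" using len4 by blast
    show "\<beta> xs = so4_beta g xs" using h\<beta>0 unfolding xs g_def beta_rot[OF S] by simp
  qed
  have evs: "e 1 v = a 1" "e 2 v = a 2" "e 3 v = a 3" "e 4 v = a 4" "e 5 v = 0" "e 6 v = 0" "e 7 v = 0"
    using ev unfolding ball17 by simp_all
  have gv: "g 1 v = 1" "g 2 v = 0" "g 3 v = 0" "g 4 v = 0" "g 5 v = 0" "g 6 v = 0" "g 7 v = 0"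
    using S by (simp_all add: g_def Gr_def evs power2_eq_square algebra_simps)
  have sub: "\<And>x y. g 1 x = 0 \<Longrightarrow> g 1 y = 0 \<Longrightarrow> g 1 (br x y) = 0" using sub0 unfolding nsum by blast
  have bil: "bilinear br" using lie by (simp add: lie_algebra_def)
  have lg: "\<And>k. k \<in> {1..7} \<Longrightarrow> linear (g k)" unfolding g_def using Gr_lin[OF lin] by blast
  have lE: "linE (Eg g)" by (rule Eg_lin) (simp_all add: lg)
  have n3: "\<And>xs. length xs = 3 \<Longrightarrow> set xs \<subseteq> {x. g 1 x = 0} \<Longrightarrow> \<exists>x y z. xs = [x,y,z] \<and> g 1 x = 0 \<and> g 1 y = 0 \<and> g 1 z = 0"
    using len3 by fastforce
  have n2: "\<And>xs. length xs = 2 \<Longrightarrow> set xs \<subseteq> {x. g 1 x = 0} \<Longrightarrow> \<exists>x y. xs = [x,y] \<and> g 1 x = 0 \<and> g 1 y = 0"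
    using len2 by fastforce
  have n4: "\<And>xs. length xs = 4 \<Longrightarrow> set xs \<subseteq> {x. g 1 x = 0} \<Longrightarrow> \<exists>x y z u. xs = [x,y,z,u] \<and> g 1 x = 0 \<and> g 1 y = 0 \<and> g 1 z = 0 \<and> g 1 u = 0"
    using len4 by fastforce
  have n5: "\<And>xs. length xs = 5 \<Longrightarrow> set xs \<subseteq> {x. g 1 x = 0} \<Longrightarrow> \<exists>x y z u w. xs = [x,y,z,u,w] \<and> g 1 x = 0 \<and> g 1 y = 0 \<and> g 1 z = 0 \<and> g 1 u = 0 \<and> g 1 w = 0"
    using len5 by fastforce
  show ?thesis unfolding Let_def nsum
  proof (intro exI[of _ "Eg g"] conjI allI impI)
    show "coframe 6 {x. g 1 x = 0} (Eg g)" unfolding g_def by (rule cof1[OF cof S])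
  next
    fix xs :: "'a list" assume "length xs = 3 \<and> set xs \<subseteq> {x. g 1 x = 0}"
    then have a1: "length xs = 3" and a2: "set xs \<subseteq> {x. g 1 x = 0}" by auto
    obtain x y z where xs: "xs = [x,y,z]" and gg: "g 1 x = 0" "g 1 y = 0" "g 1 z = 0" using n3[OF a1 a2] by auto
    show "\<alpha> xs = sqrt 6 / 3 * sl3_rho (Eg g) xs" unfolding xs by (rule A1[OF h\<alpha> h\<beta> gv gg])
  next
    fix xs :: "'a list" assume "length xs = 4 \<and> set xs \<subseteq> {x. g 1 x = 0}"
    then have a1: "length xs = 4" and a2: "set xs \<subseteq> {x. g 1 x = 0}" by auto
    obtain x y z u where xs: "xs = [x,y,z,u]" and gg: "g 1 x = 0" "g 1 y = 0" "g 1 z = 0" "g 1 u = 0" using n4[OF a1 a2] by auto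
    show "\<beta> xs = - 1/6 * wedge 2 2 (sl3_omega (Eg g)) (sl3_omega (Eg g)) xs" unfolding xs by (rule B2[OF h\<alpha> h\<beta> gv gg])
  next
    fix xs :: "'a list" assume "length xs = 2 \<and> set xs \<subseteq> {x. g 1 x = 0}"
    then have a1: "length xs = 2" and a2: "set xs \<subseteq> {x. g 1 x = 0}" by auto
    obtain x y where xs: "xs = [x,y]" and gg: "g 1 x = 0" "g 1 y = 0" using n2[OF a1 a2] by auto
    show "sl3_omega (Eg g) xs = - sqrt 3 * \<alpha> (v # xs)" unfolding xs by (rule A4[OF h\<alpha> h\<beta> gv gg])
  next
    fix xs :: "'a list" assume "length xs = 4 \<and> set xs \<subseteq> {x. g 1 x = 0}"
    then have a1: "length xs = 4" and a2: "set xs \<subseteq> {x. g 1 x = 0}" by auto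
    obtain x y z u where xs: "xs = [x,y,z,u]" and gg: "g 1 x = 0" "g 1 y = 0" "g 1 z = 0" "g 1 u = 0" using n4[OF a1 a2] by auto
    show "dform br (sl3_rho (Eg g)) xs = 0" unfolding xs by (rule drho[OF h\<alpha> h\<beta> gv sub d\<alpha> gg])
  next
    fix xs :: "'a list" assume "length xs = 5 \<and> set xs \<subseteq> {x. g 1 x = 0}"
    then have a1: "length xs = 5" and a2: "set xs \<subseteq> {x. g 1 x = 0}" by auto
    obtain x y z u w where xs: "xs = [x,y,z,u,w]" and gg: "g 1 x = 0" "g 1 y = 0" "g 1 z = 0" "g 1 u = 0" "g 1 w = 0" using n5[OF a1 a2] by auto
    show "dform br (wedge 2 2 (sl3_omega (Eg g)) (sl3_omega (Eg g))) xs = 0" unfolding xs by (rule dQ[OF h\<alpha> h\<beta> gv sub d\<beta> gg])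
  next
    fix xs :: "'a list"
    assume idl0: "\<forall>x y. y \<in> {x. g 1 x = 0} \<longrightarrow> br x y \<in> {x. g 1 x = 0}"
      and "length xs = 3 \<and> set xs \<subseteq> {x. g 1 x = 0}"
    have idl: "\<And>x y. g 1 y = 0 \<Longrightarrow> g 1 (br x y) = 0" using idl0 by blast
    have a1: "length xs = 3" and a2: "set xs \<subseteq> {x. g 1 x = 0}" using \<open>length xs = 3 \<and> _\<close> by auto
    obtain x y z where xs: "xs = [x,y,z]" and gg: "g 1 x = 0" "g 1 y = 0" "g 1 z = 0" using n3[OF a1 a2] by auto
    show "der_act (\<lambda>x. br (sqrt 2 *\<^sub>R v) x) (sl3_rho (Eg g)) xs + dform br (sl3_omega (Eg g)) xs = 0"
      unfolding xs by (rule ideal1[OF h\<alpha> h\<beta> gv bil idl lE d\<alpha> gg])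
  next
    fix xs :: "'a list"
    assume idl0: "\<forall>x y. y \<in> {x. g 1 x = 0} \<longrightarrow> br x y \<in> {x. g 1 x = 0}"
      and "length xs = 4 \<and> set xs \<subseteq> {x. g 1 x = 0}"
    have idl: "\<And>x y. g 1 y = 0 \<Longrightarrow> g 1 (br x y) = 0" using idl0 by blast
    have a1: "length xs = 4" and a2: "set xs \<subseteq> {x. g 1 x = 0}" using \<open>length xs = 4 \<and> _\<close> by auto
    obtain x y z u where xs: "xs = [x,y,z,u]" and gg: "g 1 x = 0" "g 1 y = 0" "g 1 z = 0" "g 1 u = 0" using n4[OF a1 a2] by auto
    show "- 1/4 * der_act (\<lambda>x. br (sqrt 2 *\<^sub>R v) x) (wedge 2 2 (sl3_omega (Eg g)) (sl3_omega (Eg g))) xs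
              + dform br (sl3_rhohat (Eg g)) xs + 2 * dform br (sl3_gamma (Eg g)) xs = 0"
      unfolding xs by (rule ideal2[OF h\<alpha> h\<beta> gv bil idl lE d\<beta> gg])
  qed
qed

lemma part2:
  fixes brn :: "'n::euclidean_space \<Rightarrow> 'n \<Rightarrow> 'n" and b :: "'n \<Rightarrow> 'n" and E :: "nat \<Rightarrow> 'n \<Rightarrow> real"
  assumes cof: "coframe 6 UNIV E"
    and h1: "\<forall>xs. length xs = 4 \<longrightarrow> dform brn (sl3_rho E) xs = 0"
    and h2: "\<forall>xs. length xs = 5 \<longrightarrow> dform brn (wedge 2 2 (sl3_omega E) (sl3_omega E)) xs = 0"
    and h3: "\<forall>xs. length xs = 3 \<longrightarrow> der_act b (sl3_rho E) xs + dform brn (sl3_omega E) xs = 0"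
    and h4: "\<forall>xs. length xs = 4 \<longrightarrow>
        - 1/4 * der_act b (wedge 2 2 (sl3_omega E) (sl3_omega E)) xs
        + dform brn (sl3_rhohat E) xs + 2 * dform brn (sl3_gamma E) xs = 0"
  shows "\<exists>e :: nat \<Rightarrow> 'n \<times> real \<Rightarrow> real. coframe 7 UNIV e \<and>
        (\<forall>xs. length xs = 4 \<longrightarrow> dform (semidirect brn b) (so4_alpha e) xs = 0) \<and>
        (\<forall>xs. length xs = 5 \<longrightarrow> dform (semidirect brn b) (so4_beta e) xs = 0)"
proof (intro exI[of _ "Ge E"] conjI allI impI)
  have lE: "linE E" using cof unfolding coframe_def linE_def ball16 by simp
  show "coframe 7 UNIV (Ge E)" by (rule cof2[OF cof])
  fix xs :: "('n \<times> real) list"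
  {
    assume "length xs = 4"
    then obtain p0 p1 p2 p3 where xs: "xs = [p0,p1,p2,p3]" using len4 by blast
    have "xs = [(fst p0, snd p0), (fst p1, snd p1), (fst p2, snd p2), (fst p3, snd p3)]" using xs by simp
    then show "dform (semidirect brn b) (so4_alpha (Ge E)) xs = 0"
      using dalpha_sd[OF lE h1 h3, of "fst p0" "snd p0" "fst p1" "snd p1" "fst p2" "snd p2" "fst p3" "snd p3"] by simp
  }
  {
    assume "length xs = 5"
    then obtain p0 p1 p2 p3 p4 where xs: "xs = [p0,p1,p2,p3,p4]" using len5 by blast
    have "xs = [(fst p0, snd p0), (fst p1, snd p1), (fst p2, snd p2), (fst p3, snd p3), (fst p4, snd p4)]" using xs by simp
    then show "dform (semidirect brn b) (so4_beta (Ge E)) xs = 0"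
      using dbeta_sd[OF lE h2 h4, of "fst p0" "snd p0" "fst p1" "snd p1" "fst p2" "snd p2" "fst p3" "snd p3" "fst p4" "snd p4"] by simp
  }
qed

theorem mainTheorem11:
  shows
  "(\<forall>(br :: 'a::euclidean_space \<Rightarrow> 'a \<Rightarrow> 'a) (e :: nat \<Rightarrow> 'a \<Rightarrow> real) (\<alpha> :: 'a form) (\<beta> :: 'a form)
       (a :: nat \<Rightarrow> real) (v :: 'a).
     DIM('a) = 7 \<and> lie_algebra br \<and>
     coframe 7 UNIV e \<and>
     (\<forall>xs. length xs = 3 \<longrightarrow> \<alpha> xs = so4_alpha e xs) \<and>
     (\<forall>xs. length xs = 4 \<longrightarrow> \<beta> xs = so4_beta e xs) \<and>
     (\<forall>xs. length xs = 4 \<longrightarrow> dform br \<alpha> xs = 0) \<and>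
     (\<forall>xs. length xs = 5 \<longrightarrow> dform br \<beta> xs = 0) \<and>
     (\<Sum>i=1..4. (a i)\<^sup>2) = 1 \<and>
     (\<forall>j\<in>{1..7}. e j v = (if j \<le> 4 then a j else 0)) \<and>
     (\<forall>x y. (\<Sum>i=1..4. a i * e i x) = 0 \<longrightarrow> (\<Sum>i=1..4. a i * e i y) = 0 \<longrightarrow>
            (\<Sum>i=1..4. a i * e i (br x y)) = 0)
     \<longrightarrow>
     (let n = {x. (\<Sum>i=1..4. a i * e i x) = 0} in
      \<exists>E. coframe 6 n E \<and>
        (\<forall>xs. length xs = 3 \<and> set xs \<subseteq> n \<longrightarrow> \<alpha> xs = sqrt 6 / 3 * sl3_rho E xs) \<and>
        (\<forall>xs. length xs = 4 \<and> set xs \<subseteq> n \<longrightarrow>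
              \<beta> xs = - 1/6 * wedge 2 2 (sl3_omega E) (sl3_omega E) xs) \<and>
        (\<forall>xs. length xs = 2 \<and> set xs \<subseteq> n \<longrightarrow> sl3_omega E xs = - sqrt 3 * \<alpha> (v # xs)) \<and>
        (\<forall>xs. length xs = 4 \<and> set xs \<subseteq> n \<longrightarrow> dform br (sl3_rho E) xs = 0) \<and>
        (\<forall>xs. length xs = 5 \<and> set xs \<subseteq> n \<longrightarrow>
              dform br (wedge 2 2 (sl3_omega E) (sl3_omega E)) xs = 0) \<and>
        ((\<forall>x y. y \<in> n \<longrightarrow> br x y \<in> n) \<longrightarrow>
          (let b = (\<lambda>x. br (sqrt 2 *\<^sub>R v) x) in
           (\<forall>xs. length xs = 3 \<and> set xs \<subseteq> n \<longrightarrow>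
              der_act b (sl3_rho E) xs + dform br (sl3_omega E) xs = 0) \<and>
           (\<forall>xs. length xs = 4 \<and> set xs \<subseteq> n \<longrightarrow>
              - 1/4 * der_act b (wedge 2 2 (sl3_omega E) (sl3_omega E)) xs
              + dform br (sl3_rhohat E) xs + 2 * dform br (sl3_gamma E) xs = 0)))))
   \<and>
   (\<forall>(brn :: 'n::euclidean_space \<Rightarrow> 'n \<Rightarrow> 'n) (b :: 'n \<Rightarrow> 'n) (E :: nat \<Rightarrow> 'n \<Rightarrow> real).
     DIM('n) = 6 \<and> lie_algebra brn \<and> lie_derivation brn b \<and>
     coframe 6 UNIV E \<and>
     (\<forall>xs. length xs = 4 \<longrightarrow> dform brn (sl3_rho E) xs = 0) \<and>
     (\<forall>xs. length xs = 5 \<longrightarrow> dform brn (wedge 2 2 (sl3_omega E) (sl3_omega E)) xs = 0) \<and>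
     (\<forall>xs. length xs = 3 \<longrightarrow> der_act b (sl3_rho E) xs + dform brn (sl3_omega E) xs = 0) \<and>
     (\<forall>xs. length xs = 4 \<longrightarrow>
        - 1/4 * der_act b (wedge 2 2 (sl3_omega E) (sl3_omega E)) xs
        + dform brn (sl3_rhohat E) xs + 2 * dform brn (sl3_gamma E) xs = 0)
     \<longrightarrow>
     (\<exists>e :: nat \<Rightarrow> 'n \<times> real \<Rightarrow> real. coframe 7 UNIV e \<and>
        (\<forall>xs. length xs = 4 \<longrightarrow> dform (semidirect brn b) (so4_alpha e) xs = 0) \<and>
        (\<forall>xs. length xs = 5 \<longrightarrow> dform (semidirect brn b) (so4_beta e) xs = 0)))"
  apply (rule conjI)
   apply (intro allI impI, elim conjE)
   apply (rule part1; assumption)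
  apply (intro allI impI, elim conjE)
  apply (rule part2; assumption)
  done


end
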